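(* Let $m\ge1$, $\xi\ge1$ an integer, $K_1,\dots,K_m>0$, and $\rho\in[0,1]$. The finite-population foraging Markov chain on $\mathcal S=\{\mathbf{x}\in\mathbb{Z}_{\ge0}^m:\sum_ix_i=\xi\}$ has all transition probabilities $A(\mathbf{x}\mid\mathbf{x}')$ strictly positive, and consequently it has a unique stationary distribution $\pi$, which satisfies $\pi(\mathbf{x})>0$ for all $\mathbf{x}\in\mathcal S$.
   Context: Let $\phi_i(u)=\frac{K_i}{K_i+u}$. The state $\mathbf{U}_n=(U_{1,n},\dots,U_{m,n})\in\mathcal S$ records how many of the $\xi$ foragers fly to site $i$ at time $n$. Given $\mathbf{U}_n=\mathbf{x}$, the numbers of successful foragers $V_{i,n}$ are independent with $V_{i,n}\sim\mathrm{Binomial}(x_i,\phi_i(x_i/\xi))$; let $R_n=\sum_iV_{i,n}$. If $R_n=0$ set $q_i=1/m$; otherwise $q_i=\rho\,V_{i,n}/R_n+(1-\rho)/m$. Then $\mathbf{U}_{n+1}-\mathbf{V}_n\sim\mathrm{Multinomial}(\xi-R_n,\mathbf{q})$, i.e. successful foragers return to their site and the $\xi-R_n$ unsuccessful ones are redistributed independently according to $\mathbf q$. $A(\mathbf{x}\mid\mathbf{x}')=\mathbb P[\mathbf{U}_{n+1}=\mathbf{x}\mid\mathbf{U}_n=\mathbf{x}']$. *)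

theory Defs
  imports Complex_Main
begin

text \<open>Sites are indexed by 0..m-1. A configuration is a function nat => nat that
vanishes outside {..<m}.\<close>

definition phi :: "real \<Rightarrow> real \<Rightarrow> real" where
  "phi K u = K / (K + u)"

definition state_space :: "nat \<Rightarrow> nat \<Rightarrow> (nat \<Rightarrow> nat) set" where
  "state_space m \<xi> = {x. (\<forall>i. i \<ge> m \<longrightarrow> x i = 0) \<and> (\<Sum>i<m. x i) = \<xi>}"

definition binom_prob :: "nat \<Rightarrow> real \<Rightarrow> nat \<Rightarrow> real" where
  "binom_prob n p k = (if k \<le> n then real (n choose k) * p ^ k * (1 - p) ^ (n - k) else 0)"

definition multinom_prob :: "nat \<Rightarrow> nat \<Rightarrow> (nat \<Rightarrow> real) \<Rightarrow> (nat \<Rightarrow> nat) \<Rightarrow> real" where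
  "multinom_prob m n q y =
     (if (\<Sum>i<m. y i) = n
      then fact n / (\<Prod>i<m. fact (y i)) * (\<Prod>i<m. q i ^ y i) else 0)"

text \<open>Redistribution probabilities given the vector of successful foragers v.\<close>
definition redistr :: "nat \<Rightarrow> real \<Rightarrow> (nat \<Rightarrow> nat) \<Rightarrow> nat \<Rightarrow> real" where
  "redistr m \<rho> v i =
     (let R = (\<Sum>j<m. v j) in
      if R = 0 then 1 / real m else \<rho> * real (v i) / real R + (1 - \<rho>) / real m)"

definition success_set :: "nat \<Rightarrow> (nat \<Rightarrow> nat) \<Rightarrow> (nat \<Rightarrow> nat) set" where
  "success_set m x' = {v. (\<forall>i<m. v i \<le> x' i) \<and> (\<forall>i. i \<ge> m \<longrightarrow> v i = 0)}"

text \<open>Transition probability A(x | x') = P[U_{n+1} = x | U_n = x'].\<close>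
definition trans_prob ::
  "nat \<Rightarrow> nat \<Rightarrow> (nat \<Rightarrow> real) \<Rightarrow> real \<Rightarrow> (nat \<Rightarrow> nat) \<Rightarrow> (nat \<Rightarrow> nat) \<Rightarrow> real" where
  "trans_prob m \<xi> K \<rho> x x' =
     (\<Sum>v\<in>success_set m x'.
        (\<Prod>i<m. binom_prob (x' i) (phi (K i) (real (x' i) / real \<xi>)) (v i)) *
        (if (\<forall>i<m. v i \<le> x i)
         then multinom_prob m (\<xi> - (\<Sum>i<m. v i)) (redistr m \<rho> v) (\<lambda>i. x i - v i)
         else 0))"

definition stationary_dist ::
  "nat \<Rightarrow> nat \<Rightarrow> (nat \<Rightarrow> real) \<Rightarrow> real \<Rightarrow> ((nat \<Rightarrow> nat) \<Rightarrow> real) \<Rightarrow> bool" where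
  "stationary_dist m \<xi> K \<rho> \<pi> \<longleftrightarrow>
     (\<forall>x. x \<notin> state_space m \<xi> \<longrightarrow> \<pi> x = 0) \<and>
     (\<forall>x\<in>state_space m \<xi>. \<pi> x \<ge> 0) \<and>
     (\<Sum>x\<in>state_space m \<xi>. \<pi> x) = 1 \<and>
     (\<forall>x\<in>state_space m \<xi>. \<pi> x = (\<Sum>x'\<in>state_space m \<xi>. trans_prob m \<xi> K \<rho> x x' * \<pi> x'))"

end

theory Submission
  imports Defs
begin

locale posmat =
  fixes S :: "'a set" and A :: "'a \<Rightarrow> 'a \<Rightarrow> real"
  assumes fin: "finite S" and ne: "S \<noteq> {}"
    and pos: "\<forall>x\<in>S. \<forall>x'\<in>S. A x x' > 0"
    and col: "\<forall>x'\<in>S. (\<Sum>x\<in>S. A x x') = 1"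
begin

definition "\<delta> = Min (case_prod A ` (S \<times> S))"
definition "c = 1 - real (card S) * \<delta>"

lemma delta_pos: "\<delta> > 0"
  unfolding \<delta>_def using fin ne pos by (subst Min_gr_iff) auto

lemma delta_le: "x \<in> S \<Longrightarrow> x' \<in> S \<Longrightarrow> \<delta> \<le> A x x'"
  unfolding \<delta>_def using fin by (intro Min_le) auto

lemma c_lt: "c < 1"
  unfolding c_def using delta_pos fin ne by (simp add: card_gt_0_iff)

lemma c_ge: "0 \<le> c"
proof -
  obtain x' where x': "x' \<in> S" using ne by auto
  have "(\<Sum>x\<in>S. \<delta>) \<le> (\<Sum>x\<in>S. A x x')"
    by (rule sum_mono) (use delta_le x' in auto)
  then show ?thesis using col x' unfolding c_def by simp
qed

lemma contract:
  assumes w0: "(\<Sum>x'\<in>S. w x') = 0"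
  shows "(\<Sum>x\<in>S. \<bar>\<Sum>x'\<in>S. A x x' * w x'\<bar>) \<le> c * (\<Sum>x'\<in>S. \<bar>w x'\<bar>)"
proof -
  have eq: "(\<Sum>x'\<in>S. A x x' * w x') = (\<Sum>x'\<in>S. (A x x' - \<delta>) * w x')" for x
  proof -
    have "(\<Sum>x'\<in>S. (A x x' - \<delta>) * w x') = (\<Sum>x'\<in>S. A x x' * w x') - \<delta> * (\<Sum>x'\<in>S. w x')"
      by (simp add: algebra_simps sum_subtractf sum_distrib_left sum_distrib_right)
    then show ?thesis using w0 by simp
  qed
  have "(\<Sum>x\<in>S. \<bar>\<Sum>x'\<in>S. A x x' * w x'\<bar>) \<le> (\<Sum>x\<in>S. \<Sum>x'\<in>S. (A x x' - \<delta>) * \<bar>w x'\<bar>)"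
  proof (rule sum_mono)
    fix x assume x: "x \<in> S"
    have "\<bar>\<Sum>x'\<in>S. (A x x' - \<delta>) * w x'\<bar> \<le> (\<Sum>x'\<in>S. \<bar>(A x x' - \<delta>) * w x'\<bar>)"
      by (rule sum_abs)
    also have "\<dots> = (\<Sum>x'\<in>S. (A x x' - \<delta>) * \<bar>w x'\<bar>)"
      by (rule sum.cong) (use delta_le x in \<open>auto simp: abs_mult\<close>)
    finally show "\<bar>\<Sum>x'\<in>S. A x x' * w x'\<bar> \<le> (\<Sum>x'\<in>S. (A x x' - \<delta>) * \<bar>w x'\<bar>)"
      using eq by simp
  qed
  also have "\<dots> = (\<Sum>x'\<in>S. \<Sum>x\<in>S. (A x x' - \<delta>) * \<bar>w x'\<bar>)"
    by (rule sum.swap)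
  also have "\<dots> = (\<Sum>x'\<in>S. c * \<bar>w x'\<bar>)"
  proof (rule sum.cong)
    fix x' assume x': "x' \<in> S"
    have "(\<Sum>x\<in>S. (A x x' - \<delta>) * \<bar>w x'\<bar>) = (\<Sum>x\<in>S. (A x x' - \<delta>)) * \<bar>w x'\<bar>"
      by (simp add: sum_distrib_right)
    also have "(\<Sum>x\<in>S. (A x x' - \<delta>)) = c"
      using col x' unfolding c_def by (simp add: sum_subtractf)
    finally show "(\<Sum>x\<in>S. (A x x' - \<delta>) * \<bar>w x'\<bar>) = c * \<bar>w x'\<bar>" .
  qed simp
  also have "\<dots> = c * (\<Sum>x'\<in>S. \<bar>w x'\<bar>)" by (simp add: sum_distrib_left)
  finally show ?thesis .
qed

definition "stat \<pi> \<longleftrightarrow> (\<forall>x. x \<notin> S \<longrightarrow> \<pi> x = 0) \<and> (\<forall>x\<in>S. \<pi> x \<ge> 0) \<and>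
     (\<Sum>x\<in>S. \<pi> x) = 1 \<and> (\<forall>x\<in>S. \<pi> x = (\<Sum>x'\<in>S. A x x' * \<pi> x'))"

lemma stat_pos: "stat \<pi> \<Longrightarrow> x \<in> S \<Longrightarrow> \<pi> x > 0"
proof -
  assume st: "stat \<pi>" and x: "x \<in> S"
  have nn: "\<forall>x\<in>S. \<pi> x \<ge> 0" and s1: "(\<Sum>x\<in>S. \<pi> x) = 1"
    and fx: "\<pi> x = (\<Sum>x'\<in>S. A x x' * \<pi> x')" using st x unfolding stat_def by blast+
  have "(\<Sum>x'\<in>S. \<delta> * \<pi> x') \<le> (\<Sum>x'\<in>S. A x x' * \<pi> x')"
    by (rule sum_mono, rule mult_right_mono) (use nn x delta_le in auto)
  moreover have "(\<Sum>x'\<in>S. \<delta> * \<pi> x') = \<delta>" using s1 by (simp add: sum_distrib_left[symmetric])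
  ultimately show ?thesis using fx delta_pos by linarith
qed

lemma stat_unique: "stat \<pi> \<Longrightarrow> stat \<sigma> \<Longrightarrow> \<pi> = \<sigma>"
proof -
  assume p: "stat \<pi>" and s: "stat \<sigma>"
  define w where "w x = \<pi> x - \<sigma> x" for x
  have "(\<Sum>x\<in>S. \<pi> x) = 1" "(\<Sum>x\<in>S. \<sigma> x) = 1" using p s unfolding stat_def by blast+
  then have w0: "(\<Sum>x'\<in>S. w x') = 0" by (simp add: w_def sum_subtractf)
  have fx: "x \<in> S \<Longrightarrow> w x = (\<Sum>x'\<in>S. A x x' * w x')" for x
  proof -
    assume x: "x \<in> S"
    have "\<pi> x = (\<Sum>x'\<in>S. A x x' * \<pi> x')" "\<sigma> x = (\<Sum>x'\<in>S. A x x' * \<sigma> x')"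
      using p s x unfolding stat_def by blast+
    then show ?thesis by (simp add: w_def sum_subtractf[symmetric] algebra_simps)
  qed
  have "(\<Sum>x\<in>S. \<bar>w x\<bar>) = (\<Sum>x\<in>S. \<bar>\<Sum>x'\<in>S. A x x' * w x'\<bar>)"
    by (rule sum.cong) (auto simp: fx[symmetric])
  also have "\<dots> \<le> c * (\<Sum>x'\<in>S. \<bar>w x'\<bar>)" by (rule contract[OF w0])
  finally have "(1 - c) * (\<Sum>x\<in>S. \<bar>w x\<bar>) \<le> 0" by (simp add: algebra_simps)
  moreover have "(\<Sum>x\<in>S. \<bar>w x\<bar>) \<ge> 0" by (simp add: sum_nonneg)
  ultimately have "(\<Sum>x\<in>S. \<bar>w x\<bar>) = 0" using c_lt
    by (smt (verit) mult_pos_pos)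
  then have "\<forall>x\<in>S. \<bar>w x\<bar> = 0" using fin by (subst (asm) sum_nonneg_eq_0_iff) auto
  then show "\<pi> = \<sigma>" using p s unfolding stat_def w_def by (metis abs_0_eq eq_iff_diff_eq_0 ext)
qed

definition "T p = (\<lambda>x. if x \<in> S then (\<Sum>x'\<in>S. A x x' * p x') else 0)"
definition "p0 = (\<lambda>x. if x \<in> S then 1 / real (card S) else 0)"
definition "p n = (T ^^ n) p0"

lemma p_Suc: "p (Suc n) = T (p n)" by (simp add: p_def)

lemma p_out: "x \<notin> S \<Longrightarrow> p n x = 0"
  by (cases n) (auto simp: p_def p0_def T_def)

lemma p_dist: "(\<forall>x\<in>S. p n x \<ge> 0) \<and> (\<Sum>x\<in>S. p n x) = 1"
proof (induction n)
  case 0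
  then show ?case using fin ne by (simp add: p_def p0_def card_gt_0_iff)
next
  case (Suc n)
  have nn: "\<forall>x\<in>S. p (Suc n) x \<ge> 0"
  proof
    fix x assume x: "x \<in> S"
    have "\<forall>x'\<in>S. 0 \<le> A x x' * p n x'" using Suc pos x by (simp add: less_imp_le)
    then show "p (Suc n) x \<ge> 0" using x by (simp add: p_Suc T_def sum_nonneg)
  qed
  have "(\<Sum>x\<in>S. p (Suc n) x) = (\<Sum>x\<in>S. \<Sum>x'\<in>S. A x x' * p n x')" by (simp add: p_Suc T_def)
  also have "\<dots> = (\<Sum>x'\<in>S. \<Sum>x\<in>S. A x x' * p n x')" by (rule sum.swap)
  also have "\<dots> = (\<Sum>x'\<in>S. p n x')"
    by (rule sum.cong) (use col in \<open>auto simp: sum_distrib_right[symmetric]\<close>)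
  finally show ?case using nn Suc by simp
qed

definition "d n x = p (Suc n) x - p n x"

lemma d_sum: "(\<Sum>x\<in>S. d n x) = 0"
  using p_dist[of n] p_dist[of "Suc n"] by (simp add: d_def sum_subtractf)

lemma d_Suc: "x \<in> S \<Longrightarrow> d (Suc n) x = (\<Sum>x'\<in>S. A x x' * d n x')"
  by (simp add: d_def p_Suc[of "Suc n"] p_Suc[of n] T_def sum_subtractf algebra_simps)

definition "D0 = (\<Sum>x\<in>S. \<bar>d 0 x\<bar>)"

lemma d_bound: "(\<Sum>x\<in>S. \<bar>d n x\<bar>) \<le> c ^ n * D0"
proof (induction n)
  case 0 then show ?case by (simp add: D0_def)
next
  case (Suc n)
  have "(\<Sum>x\<in>S. \<bar>d (Suc n) x\<bar>) = (\<Sum>x\<in>S. \<bar>\<Sum>x'\<in>S. A x x' * d n x'\<bar>)"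
    by (rule sum.cong) (auto simp: d_Suc)
  also have "\<dots> \<le> c * (\<Sum>x\<in>S. \<bar>d n x\<bar>)" by (rule contract[OF d_sum])
  also have "\<dots> \<le> c * (c ^ n * D0)" by (rule mult_left_mono[OF Suc c_ge])
  finally show ?case by simp
qed

lemma d_pt: "\<bar>d n x\<bar> \<le> c ^ n * D0"
proof (cases "x \<in> S")
  case True
  have "\<bar>d n x\<bar> \<le> (\<Sum>x\<in>S. \<bar>d n x\<bar>)"
    using True fin by (intro member_le_sum) auto
  then show ?thesis using d_bound[of n] by simp
next
  case False then show ?thesis using c_ge by (simp add: d_def p_out D0_def sum_nonneg)
qed

lemma p_conv: "convergent (\<lambda>n. p n x)"
proof -
  have sm: "summable (\<lambda>n. d n x)"
  proof (rule summable_comparison_test)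
    show "\<exists>N. \<forall>n\<ge>N. norm (d n x) \<le> c ^ n * D0" using d_pt by auto
    show "summable (\<lambda>n. c ^ n * D0)" using c_ge c_lt by (intro summable_mult2 summable_geometric) simp
  qed
  have "(\<lambda>n. p 0 x + (\<Sum>k<n. d k x)) \<longlonglongrightarrow> p 0 x + suminf (\<lambda>n. d n x)"
    by (intro tendsto_add tendsto_const summable_LIMSEQ sm)
  moreover have "p 0 x + (\<Sum>k<n. d k x) = p n x" for n
    unfolding d_def by (subst sum_lessThan_telescope) simp
  ultimately show ?thesis unfolding convergent_def by auto
qed

definition "\<pi>\<^sub>0 x = lim (\<lambda>n. p n x)"

lemma p_lim: "(\<lambda>n. p n x) \<longlonglongrightarrow> \<pi>\<^sub>0 x"
  unfolding \<pi>\<^sub>0_def using p_conv by (simp add: convergent_LIMSEQ_iff)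

lemma stat_exists: "stat \<pi>\<^sub>0"
  unfolding stat_def
proof (intro conjI ballI allI impI)
  fix x assume "x \<notin> S"
  then show "\<pi>\<^sub>0 x = 0" using p_lim[of x] by (simp add: p_out LIMSEQ_const_iff)
next
  fix x assume "x \<in> S"
  then show "\<pi>\<^sub>0 x \<ge> 0" using p_lim[of x] p_dist by (intro LIMSEQ_le_const[OF p_lim]) auto
next
  have "(\<lambda>n. \<Sum>x\<in>S. p n x) \<longlonglongrightarrow> (\<Sum>x\<in>S. \<pi>\<^sub>0 x)" by (intro tendsto_sum p_lim)
  then show "(\<Sum>x\<in>S. \<pi>\<^sub>0 x) = 1" using p_dist by (simp add: LIMSEQ_const_iff)
next
  fix x assume x: "x \<in> S"
  have "(\<lambda>n. \<Sum>x'\<in>S. A x x' * p n x') \<longlonglongrightarrow> (\<Sum>x'\<in>S. A x x' * \<pi>\<^sub>0 x')"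
    by (intro tendsto_sum tendsto_mult_left p_lim)
  moreover have "(\<lambda>n. p (Suc n) x) \<longlonglongrightarrow> \<pi>\<^sub>0 x" using p_lim by (rule LIMSEQ_Suc)
  ultimately show "\<pi>\<^sub>0 x = (\<Sum>x'\<in>S. A x x' * \<pi>\<^sub>0 x')"
    using x by (simp add: p_Suc T_def LIMSEQ_unique)
qed

theorem main: "(\<exists>!\<pi>. stat \<pi>) \<and> (\<forall>\<pi>. stat \<pi> \<longrightarrow> (\<forall>x\<in>S. \<pi> x > 0))"
  using stat_exists stat_unique stat_pos by blast

end

definition box :: "nat \<Rightarrow> (nat \<Rightarrow> nat) \<Rightarrow> (nat \<Rightarrow> nat) set" where
  "box m b = {v. (\<forall>i<m. v i \<le> b i) \<and> (\<forall>i. i \<ge> m \<longrightarrow> v i = 0)}"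

lemma box_Suc_bij:
  fixes h :: "(nat \<Rightarrow> nat) \<Rightarrow> 'b::comm_monoid_add"
  shows "sum h (box (Suc m) b) = (\<Sum>(k,v)\<in>{..b m} \<times> box m b. h (v(m:=k)))"
  by (rule sum.reindex_bij_witness[where j="\<lambda>v. (v m, v(m:=0))" and i="\<lambda>(k,v). v(m:=k)"])
     (auto simp: box_def less_Suc_eq)

lemma box_0: "box 0 b = {\<lambda>_. 0}" by (auto simp: box_def)

lemma finite_box: "finite (box m b)"
proof (induction m)
  case 0 then show ?case by (simp add: box_0)
next
  case (Suc m)
  have "box (Suc m) b \<subseteq> (\<lambda>(k,v). v(m:=k)) ` ({..b m} \<times> box m b)"
  proof
    fix v assume v: "v \<in> box (Suc m) b"
    then have "(v m, v(m:=0)) \<in> {..b m} \<times> box m b" by (auto simp: box_def)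
    then show "v \<in> (\<lambda>(k,v). v(m:=k)) ` ({..b m} \<times> box m b)"
      by (intro image_eqI[where x="(v m, v(m:=0))"]) auto
  qed
  then show ?case using Suc by (meson finite_SigmaI finite_atMost finite_imageI finite_subset)
qed

lemma box_prod:
  fixes f :: "nat \<Rightarrow> nat \<Rightarrow> real"
  shows "(\<Sum>v\<in>box m b. \<Prod>i<m. f i (v i)) = (\<Prod>i<m. \<Sum>k\<le>b i. f i k)"
proof (induction m)
  case 0 then show ?case by (simp add: box_0)
next
  case (Suc m)
  have "(\<Sum>v\<in>box (Suc m) b. \<Prod>i<Suc m. f i (v i)) =
      (\<Sum>(k,v)\<in>{..b m} \<times> box m b. \<Prod>i<Suc m. f i ((v(m:=k)) i))"
    by (rule box_Suc_bij)
  also have "\<dots> = (\<Sum>(k,v)\<in>{..b m} \<times> box m b. f m k * (\<Prod>i<m. f i (v i)))"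
    by (rule sum.cong) (auto simp: lessThan_Suc intro!: prod.cong)
  also have "\<dots> = (\<Sum>k\<le>b m. f m k) * (\<Sum>v\<in>box m b. \<Prod>i<m. f i (v i))"
    by (simp add: sum_product sum.cartesian_product)
  finally show ?case using Suc by (simp add: lessThan_Suc mult.commute)
qed

lemma state_space_sub: "state_space m n \<subseteq> box m (\<lambda>_. n)"
proof
  fix x assume x: "x \<in> state_space m n"
  have "\<forall>i<m. x i \<le> n"
  proof (intro allI impI)
    fix i assume "i < m"
    then have "x i \<le> (\<Sum>i<m. x i)" by (intro member_le_sum) auto
    then show "x i \<le> n" using x by (simp add: state_space_def)
  qed
  then show "x \<in> box m (\<lambda>_. n)" using x by (simp add: box_def state_space_def)
qed

lemma finite_state_space: "finite (state_space m n)"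
  using finite_subset[OF state_space_sub finite_box] .

lemma multinomial:
  fixes q :: "nat \<Rightarrow> real"
  shows "(\<Sum>y\<in>state_space m n. \<Prod>i<m. q i ^ y i / fact (y i)) = (\<Sum>i<m. q i) ^ n / fact n"
proof (induction m arbitrary: n)
  case 0
  have "state_space 0 n = (if n = 0 then {\<lambda>_. 0} else {})" by (auto simp: state_space_def)
  then show ?case by simp
next
  case (Suc m)
  let ?g = "\<lambda>y. \<Prod>i<Suc m. q i ^ y i / fact (y i)"
  have "sum ?g (state_space (Suc m) n) = (\<Sum>(k,y)\<in>Sigma {..n} (\<lambda>k. state_space m (n-k)). ?g (y(m:=k)))"
  proof -
    have m1: "(a m, a(m := 0)) \<in> Sigma {..n} (\<lambda>k. state_space m (n - k))"
      if a: "a \<in> state_space (Suc m) n" for a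
    proof -
      from a have s: "(\<Sum>i<m. a i) + a m = n" by (simp add: state_space_def)
      have "(\<Sum>i<m. (a(m:=0)) i) = (\<Sum>i<m. a i)" by (intro sum.cong) auto
      then show "(a m, a(m := 0)) \<in> Sigma {..n} (\<lambda>k. state_space m (n - k))"
        using a s by (auto simp: state_space_def)
    qed
    have m2: "y(m := k) \<in> state_space (Suc m) n"
      if ky: "k \<le> n" "y \<in> state_space m (n-k)" for k y
    proof -
      have "(\<Sum>i<m. (y(m:=k)) i) = (\<Sum>i<m. y i)" by (intro sum.cong) auto
      then show ?thesis using ky by (auto simp: state_space_def)
    qed
    show ?thesis
      by (rule sum.reindex_bij_witness[where j="\<lambda>v. (v m, v(m:=0))" and i="\<lambda>(k,v). v(m:=k)"])
         (use m1 m2 in \<open>auto simp: state_space_def\<close>)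
  qed
  also have "\<dots> = (\<Sum>(k,y)\<in>Sigma {..n} (\<lambda>k. state_space m (n-k)).
        q m ^ k / fact k * (\<Prod>i<m. q i ^ y i / fact (y i)))"
    by (rule sum.cong) (auto simp: lessThan_Suc mult.commute intro!: prod.cong)
  also have "\<dots> = (\<Sum>k\<le>n. q m ^ k / fact k * (\<Sum>y\<in>state_space m (n-k). \<Prod>i<m. q i ^ y i / fact (y i)))"
    by (subst sum.Sigma[symmetric]) (auto simp: finite_state_space sum_distrib_left)
  also have "\<dots> = (\<Sum>k\<le>n. q m ^ k / fact k * ((\<Sum>i<m. q i) ^ (n-k) / fact (n-k)))"
    using Suc by simp
  also have "\<dots> = (\<Sum>k\<le>n. real (n choose k) * q m ^ k * (\<Sum>i<m. q i) ^ (n-k)) / fact n"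
    by (simp add: sum_divide_distrib binomial_fact)
  also have "\<dots> = (q m + (\<Sum>i<m. q i)) ^ n / fact n"
    by (simp add: binomial_ring)
  finally show ?case by (simp add: add.commute)
qed

lemma multinom_sum:
  "(\<Sum>y\<in>state_space m n. multinom_prob m n q y) = (\<Sum>i<m. q i) ^ n"
proof -
  have "(\<Sum>y\<in>state_space m n. multinom_prob m n q y) =
        (\<Sum>y\<in>state_space m n. fact n * (\<Prod>i<m. q i ^ y i / fact (y i)))"
    by (rule sum.cong) (auto simp: multinom_prob_def state_space_def prod_dividef)
  also have "\<dots> = (\<Sum>i<m. q i) ^ n"
    by (simp add: sum_distrib_left[symmetric] multinomial)
  finally show ?thesis .
qed

lemma binom_sum:
  assumes "0 \<le> p" "p \<le> 1"
  shows "(\<Sum>k\<le>n. binom_prob n p k) = 1"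
proof -
  have "(p + (1 - p)) ^ n = (\<Sum>k\<le>n. real (n choose k) * p ^ k * (1 - p) ^ (n - k))"
    by (rule binomial_ring)
  then have "(\<Sum>k\<le>n. binom_prob n p k) = (p + (1 - p)) ^ n"
    by (simp add: binom_prob_def)
  then show ?thesis by simp
qed


lemma phi_pos: "K > 0 \<Longrightarrow> u \<ge> 0 \<Longrightarrow> 0 < phi K u"
  by (simp add: phi_def)

lemma phi_le1: "K > 0 \<Longrightarrow> u \<ge> 0 \<Longrightarrow> phi K u \<le> 1"
  by (simp add: phi_def)

lemma phi_lt1: "K > 0 \<Longrightarrow> u > 0 \<Longrightarrow> phi K u < 1"
  by (simp add: phi_def)

lemma redistr_nonneg: "m \<ge> 1 \<Longrightarrow> 0 \<le> \<rho> \<Longrightarrow> \<rho> \<le> 1 \<Longrightarrow> redistr m \<rho> v i \<ge> 0"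
  unfolding redistr_def Let_def by (auto intro!: add_nonneg_nonneg divide_nonneg_nonneg mult_nonneg_nonneg sum_nonneg)

lemma phi_01: "K > 0 \<Longrightarrow> u \<ge> 0 \<Longrightarrow> 0 \<le> phi K u \<and> phi K u \<le> 1"
  using phi_pos[of K u] phi_le1[of K u] by simp

lemma redistr_sum:
  assumes "m \<ge> 1"
  shows "(\<Sum>i<m. redistr m \<rho> v i) = 1"
proof (cases "(\<Sum>j<m. v j) = 0")
  case True
  then show ?thesis using assms by (simp add: redistr_def)
next
  case False
  define R where "R = real (\<Sum>j<m. v j)"
  have R0: "R \<noteq> 0" using False unfolding R_def by (metis of_nat_eq_0_iff)
  have "(\<Sum>i<m. redistr m \<rho> v i) = (\<Sum>i<m. (\<rho> / R) * real (v i) + (1 - \<rho>) / real m)"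
    unfolding redistr_def Let_def if_not_P[OF False] R_def by (simp add: algebra_simps)
  also have "\<dots> = (\<rho> / R) * (\<Sum>i<m. real (v i)) + (1 - \<rho>)"
    using assms by (simp add: sum.distrib sum_distrib_left[symmetric] sum_divide_distrib[symmetric])
  also have "(\<Sum>i<m. real (v i)) = R" by (simp add: R_def)
  finally show ?thesis using R0 by simp
qed

lemma binom_nonneg: "0 \<le> p \<Longrightarrow> p \<le> 1 \<Longrightarrow> binom_prob n p k \<ge> 0"
  by (simp add: binom_prob_def)

lemma multinom_nonneg: "\<forall>i<m. q i \<ge> 0 \<Longrightarrow> multinom_prob m n q y \<ge> 0"
  unfolding multinom_prob_def
  by (auto intro!: mult_nonneg_nonneg prod_nonneg divide_nonneg_pos prod_pos)

lemma success_box: "success_set m x' = box m x'"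
  by (simp add: success_set_def box_def)

lemma inner_sum:
  assumes m: "m \<ge> 1" and x': "x' \<in> state_space m \<xi>" and v: "v \<in> success_set m x'"
  shows "(\<Sum>x\<in>state_space m \<xi>. (if (\<forall>i<m. v i \<le> x i)
         then multinom_prob m (\<xi> - (\<Sum>i<m. v i)) (redistr m \<rho> v) (\<lambda>i. x i - v i) else 0)) = 1"
proof -
  let ?R = "\<Sum>i<m. v i"
  have vle: "\<forall>i<m. v i \<le> x' i" and v0: "\<forall>i. i \<ge> m \<longrightarrow> v i = 0" using v by (auto simp: success_set_def)
  have Rle: "?R \<le> \<xi>"
  proof -
    have "?R \<le> (\<Sum>i<m. x' i)" using vle by (intro sum_mono) auto
    then show ?thesis using x' by (simp add: state_space_def)
  qed
  have "(\<Sum>x\<in>state_space m \<xi>. (if (\<forall>i<m. v i \<le> x i)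
         then multinom_prob m (\<xi> - ?R) (redistr m \<rho> v) (\<lambda>i. x i - v i) else 0)) =
        (\<Sum>x\<in>{x\<in>state_space m \<xi>. \<forall>i<m. v i \<le> x i}. multinom_prob m (\<xi> - ?R) (redistr m \<rho> v) (\<lambda>i. x i - v i))"
    by (simp add: sum.inter_filter finite_state_space)
  also have "\<dots> = (\<Sum>y\<in>state_space m (\<xi> - ?R). multinom_prob m (\<xi> - ?R) (redistr m \<rho> v) y)"
  proof -
    have m1: "(\<lambda>i. x i - v i) \<in> state_space m (\<xi> - ?R)" if "x \<in> {x\<in>state_space m \<xi>. \<forall>i<m. v i \<le> x i}" for x
    proof -
      have "(\<Sum>i<m. x i - v i) = (\<Sum>i<m. x i) - ?R" using that by (intro sum_subtractf_nat) auto
      then show ?thesis using that by (auto simp: state_space_def)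
    qed
    have m2: "(\<lambda>i. y i + v i) \<in> {x\<in>state_space m \<xi>. \<forall>i<m. v i \<le> x i}" if "y \<in> state_space m (\<xi> - ?R)" for y
    proof -
      have "(\<Sum>i<m. y i + v i) = (\<Sum>i<m. y i) + ?R" by (simp add: sum.distrib)
      then show ?thesis using that Rle v0 by (auto simp: state_space_def)
    qed
    have aux: "a i - v i + v i = a i" if "\<forall>i<m. v i \<le> a i" for a i
      using v0 that by (cases "i < m") auto
    show ?thesis
      by (rule sum.reindex_bij_witness[where j="\<lambda>x i. x i - v i" and i="\<lambda>y i. y i + v i"])
         (use m1 m2 v0 aux in \<open>auto simp: state_space_def fun_eq_iff\<close>)
  qed
  also have "\<dots> = 1" using m by (simp add: multinom_sum redistr_sum)
  finally show ?thesis .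
qed

lemma col_sum:
  assumes m: "m \<ge> 1" and xi: "\<xi> \<ge> 1" and K: "\<forall>i<m. K i > 0" and r: "0 \<le> \<rho>" "\<rho> \<le> 1"
    and x': "x' \<in> state_space m \<xi>"
  shows "(\<Sum>x\<in>state_space m \<xi>. trans_prob m \<xi> K \<rho> x x') = 1"
proof -
  define P where "P v = (\<Prod>i<m. binom_prob (x' i) (phi (K i) (real (x' i) / real \<xi>)) (v i))" for v
  define M where "M v x = (if (\<forall>i<m. v i \<le> x i)
         then multinom_prob m (\<xi> - (\<Sum>i<m. v i)) (redistr m \<rho> v) (\<lambda>i. x i - v i) else 0)" for v x
  have "(\<Sum>x\<in>state_space m \<xi>. trans_prob m \<xi> K \<rho> x x') =
        (\<Sum>x\<in>state_space m \<xi>. \<Sum>v\<in>success_set m x'. P v * M v x)"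
    by (simp add: trans_prob_def P_def M_def)
  also have "\<dots> = (\<Sum>v\<in>success_set m x'. \<Sum>x\<in>state_space m \<xi>. P v * M v x)"
    by (rule sum.swap)
  also have "\<dots> = (\<Sum>v\<in>success_set m x'. P v)"
  proof (rule sum.cong)
    fix v assume v: "v \<in> success_set m x'"
    have "(\<Sum>x\<in>state_space m \<xi>. M v x) = 1" unfolding M_def by (rule inner_sum[OF m x' v])
    then show "(\<Sum>x\<in>state_space m \<xi>. P v * M v x) = P v" by (simp add: sum_distrib_left[symmetric])
  qed simp
  also have "\<dots> = (\<Prod>i<m. \<Sum>k\<le>x' i. binom_prob (x' i) (phi (K i) (real (x' i) / real \<xi>)) k)"
    unfolding P_def success_box by (rule box_prod)
  also have "\<dots> = 1"
    using K by (intro prod.neutral ballI binom_sum) (auto dest!: phi_01[where u="real (x' _) / real \<xi>"])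
  finally show ?thesis .
qed

lemma trans_pos:
  assumes m: "m \<ge> 1" and xi: "\<xi> \<ge> 1" and K: "\<forall>i<m. K i > 0" and r: "0 \<le> \<rho>" "\<rho> \<le> 1"
    and x: "x \<in> state_space m \<xi>" and x': "x' \<in> state_space m \<xi>"
  shows "trans_prob m \<xi> K \<rho> x x' > 0"
proof -
  define P where "P v = (\<Prod>i<m. binom_prob (x' i) (phi (K i) (real (x' i) / real \<xi>)) (v i))" for v
  define M where "M v = (if (\<forall>i<m. v i \<le> x i)
         then multinom_prob m (\<xi> - (\<Sum>i<m. v i)) (redistr m \<rho> v) (\<lambda>i. x i - v i) else 0)" for v
  have tp: "trans_prob m \<xi> K \<rho> x x' = (\<Sum>v\<in>success_set m x'. P v * M v)"
    by (simp add: trans_prob_def P_def M_def)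
  have pb: "0 \<le> phi (K i) (real (x' i) / real \<xi>) \<and> phi (K i) (real (x' i) / real \<xi>) \<le> 1" if "i < m" for i
    using K that phi_01[of "K i" "real (x' i) / real \<xi>"] by auto
  have nn: "0 \<le> P v * M v" for v
    unfolding P_def M_def using pb redistr_nonneg[OF m r]
    by (auto intro!: mult_nonneg_nonneg prod_nonneg binom_nonneg multinom_nonneg)
  have P0: "P (\<lambda>_. 0) > 0"
    unfolding P_def
  proof (rule prod_pos)
    fix i assume i: "i \<in> {..<m}"
    show "0 < binom_prob (x' i) (phi (K i) (real (x' i) / real \<xi>)) 0"
    proof (cases "x' i = 0")
      case True then show ?thesis by (simp add: binom_prob_def)
    next
      case False
      then have "phi (K i) (real (x' i) / real \<xi>) < 1" using K i xi by (intro phi_lt1) auto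
      then show ?thesis by (simp add: binom_prob_def)
    qed
  qed
  have M0: "M (\<lambda>_. 0) > 0"
  proof -
    have sx: "(\<Sum>i<m. x i) = \<xi>" using x by (simp add: state_space_def)
    have "M (\<lambda>_. 0) = multinom_prob m \<xi> (\<lambda>_. 1 / real m) x"
    proof -
      have "redistr m \<rho> (\<lambda>_. 0) = (\<lambda>_. 1 / real m)" by (rule ext) (simp add: redistr_def)
      then show ?thesis by (simp add: M_def)
    qed
    also have "\<dots> > 0" using sx m unfolding multinom_prob_def
      by (auto intro!: mult_pos_pos divide_pos_pos prod_pos)
    finally show ?thesis .
  qed
  have fin: "finite (success_set m x')" by (simp add: success_box finite_box)
  have "(\<lambda>_. 0) \<in> success_set m x'" by (simp add: success_set_def)
  then show ?thesis unfolding tp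
    by (intro sum_pos2[OF fin, where i="\<lambda>_. 0"]) (use nn P0 M0 in auto)
qed


theorem mainTheorem4:
  fixes m \<xi> :: nat and K :: "nat \<Rightarrow> real" and \<rho> :: real
  assumes "m \<ge> 1" and "\<xi> \<ge> 1"
    and "\<forall>i<m. K i > 0"
    and "0 \<le> \<rho>" and "\<rho> \<le> 1"
  shows "(\<forall>x\<in>state_space m \<xi>. \<forall>x'\<in>state_space m \<xi>. trans_prob m \<xi> K \<rho> x x' > 0)
    \<and> (\<exists>!\<pi>. stationary_dist m \<xi> K \<rho> \<pi>)
    \<and> (\<forall>\<pi>. stationary_dist m \<xi> K \<rho> \<pi> \<longrightarrow> (\<forall>x\<in>state_space m \<xi>. \<pi> x > 0))"
proof -
  have P: "\<forall>x\<in>state_space m \<xi>. \<forall>x'\<in>state_space m \<xi>. trans_prob m \<xi> K \<rho> x x' > 0"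
    using trans_pos[OF assms] by blast
  have ne: "state_space m \<xi> \<noteq> {}"
  proof -
    have "(\<lambda>i. if i = 0 then \<xi> else 0) \<in> state_space m \<xi>"
      using assms(1) by (simp add: state_space_def)
    then show ?thesis by blast
  qed
  interpret pm: posmat "state_space m \<xi>" "trans_prob m \<xi> K \<rho>"
    using finite_state_space ne P col_sum[OF assms] by unfold_locales auto
  have eq: "stationary_dist m \<xi> K \<rho> = pm.stat"
    by (rule ext) (unfold stationary_dist_def pm.stat_def, rule refl)
  show ?thesis using P pm.main unfolding eq by blast
qed

end
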